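(* Let $\{x_k\}_{k\ge 0}$ be a log-convex sequence and define $z_n=\sum_{k=0}^{n}c(n,k)x_k$ for $n\ge 0$. Then $\{z_n\}_{n\ge 0}$ is log-convex.
   Context: $c(n,k)$ denotes the signless Stirling number of the first kind: the number of permutations of $\{1,\dots,n\}$ with exactly $k$ cycles, with $c(0,0)=1$ and $c(n,k)=0$ unless $0\le k\le n$. A sequence $a_0,a_1,\ldots$ of nonnegative real numbers is log-convex if $a_{k-1}a_{k+1}\ge a_k^2$ for all $k\ge 1$. *)

theory Defs
  imports Complex_Main "HOL-Combinatorics.Stirling"
begin

definition log_convex :: "(nat \<Rightarrow> real) \<Rightarrow> bool" where
  "log_convex a \<longleftrightarrow> (\<forall>k. a k \<ge> 0) \<and> (\<forall>k\<ge>1. a (k - 1) * a (k + 1) \<ge> (a k)\<^sup>2)"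

end

theory Submission
  imports Defs
begin

definition lc :: "(nat \<Rightarrow> real) \<Rightarrow> bool" where
  "lc a \<longleftrightarrow> (\<forall>j. a j \<ge> 0) \<and> (\<forall>j. a j * a (j + 2) \<ge> (a (j + 1))\<^sup>2)"

lemma lc_add:
  assumes "lc a" "lc b" shows "lc (\<lambda>j. a j + b j)"
  unfolding lc_def
proof (intro conjI allI)
  fix j
  show "0 \<le> a j + b j" using assms unfolding lc_def by (simp add: add_nonneg_nonneg)
  have a0: "\<And>i. a i \<ge> 0" and b0: "\<And>i. b i \<ge> 0" using assms unfolding lc_def by auto
  have ha: "a j * a (j+2) \<ge> (a (j+1))\<^sup>2" and hb: "b j * b (j+2) \<ge> (b (j+1))\<^sup>2"
    using assms unfolding lc_def by auto
  define p where "p = a j * b (j+2)"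
  define q where "q = b j * a (j+2)"
  have pq: "p * q \<ge> (a (j+1) * b (j+1))\<^sup>2"
  proof -
    have "p * q = (a j * a (j+2)) * (b j * b (j+2))" unfolding p_def q_def by simp
    also have "\<dots> \<ge> (a (j+1))\<^sup>2 * (b (j+1))\<^sup>2"
      using ha hb by (intro mult_mono) (auto simp: a0 b0)
    finally show ?thesis by (simp add: power_mult_distrib)
  qed
  have "(2 * (a (j+1) * b (j+1)))\<^sup>2 \<le> 4 * (p*q)" using pq by (simp add: power_mult_distrib)
  also have "4 * (p * q) \<le> (p + q)\<^sup>2"
    using sum_squares_ge_zero[of "p - q" 0] by (simp add: power2_eq_square algebra_simps)
  finally have "(2 * (a (j+1) * b (j+1)))\<^sup>2 \<le> (p + q)\<^sup>2" .
  hence s: "2 * (a (j+1) * b (j+1)) \<le> p + q"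
    by (rule power2_le_imp_le) (simp add: p_def q_def a0 b0)
  have "(a j + b j) * (a (j+2) + b (j+2)) = a j * a (j+2) + b j * b (j+2) + (p + q)"
    unfolding p_def q_def by (simp add: algebra_simps)
  also have "\<dots> \<ge> (a (j+1))\<^sup>2 + (b (j+1))\<^sup>2 + 2 * (a (j+1) * b (j+1))"
    using ha hb s by linarith
  finally show "(a (j + 1) + b (j + 1))\<^sup>2 \<le> (a j + b j) * (a (j + 2) + b (j + 2))"
    by (simp add: power2_eq_square algebra_simps)
qed

lemma lc_scale:
  assumes "lc a" "c \<ge> 0" shows "lc (\<lambda>j. c * a j)"
  using assms unfolding lc_def
  by (auto simp: power_mult_distrib power2_eq_square algebra_simps intro: mult_left_mono)

lemma lc_shift:
  assumes "lc a" shows "lc (\<lambda>j. a (Suc j))"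
  unfolding lc_def
proof (intro conjI allI)
  fix j
  show "0 \<le> a (Suc j)" using assms unfolding lc_def by auto
  have "a (Suc j) * a (Suc j + 2) \<ge> (a (Suc j + 1))\<^sup>2" using assms unfolding lc_def by blast
  then show "(a (Suc (j + 1)))\<^sup>2 \<le> a (Suc j) * a (Suc (j + 2))" by simp
qed

definition F :: "(nat \<Rightarrow> real) \<Rightarrow> nat \<Rightarrow> nat \<Rightarrow> real" where
  "F x n j = (\<Sum>k\<le>n. real (stirling n k) * x (k + j))"

lemma F_rec: "F x (Suc n) j = real n * F x n j + F x n (Suc j)"
proof -
  have "F x (Suc n) j = (\<Sum>k\<le>n. real (stirling (Suc n) (Suc k)) * x (Suc k + j))"
    unfolding F_def by (subst sum.atMost_Suc_shift) simp
  also have "\<dots> = real n * (\<Sum>k\<le>n. real (stirling n (Suc k)) * x (Suc k + j))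
      + (\<Sum>k\<le>n. real (stirling n k) * x (k + Suc j))"
    by (simp add: sum.distrib sum_distrib_left algebra_simps)
  also have "real n * (\<Sum>k\<le>n. real (stirling n (Suc k)) * x (Suc k + j)) = real n * F x n j"
  proof -
    have "(\<Sum>k\<le>Suc n. real (stirling n k) * x (k + j)) =
        real (stirling n 0) * x j + (\<Sum>k\<le>n. real (stirling n (Suc k)) * x (Suc k + j))"
      by (subst sum.atMost_Suc_shift) simp
    moreover have "(\<Sum>k\<le>Suc n. real (stirling n k) * x (k + j)) = F x n j"
      unfolding F_def by simp
    ultimately show ?thesis by (cases n) (auto simp: algebra_simps)
  qed
  finally show ?thesis unfolding F_def by simp
qed

lemma F_lc:
  assumes "lc x" shows "lc (F x n)"
proof (induction n)
  case 0
  have "F x 0 = x" unfolding F_def by (auto simp: fun_eq_iff)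
  then show ?case using assms by simp
next
  case (Suc n)
  have "F x (Suc n) = (\<lambda>j. real n * F x n j + F x n (Suc j))" by (simp add: F_rec fun_eq_iff)
  then show ?case using Suc lc_add lc_scale lc_shift by simp
qed

lemma F_step:
  assumes "lc x" "n \<ge> 1"
  shows "F x (n - 1) 0 * F x (n + 1) 0 \<ge> (F x n 0)\<^sup>2"
proof -
  obtain m where n: "n = Suc m" using assms(2) by (cases n) auto
  define a where "a = F x m 0"
  define b where "b = F x m 1"
  define c where "c = F x m 2"
  have l: "lc (F x m)" using F_lc assms(1) .
  have a0: "a \<ge> 0" and b0: "b \<ge> 0" and ac: "a * c \<ge> b\<^sup>2"
    using l unfolding lc_def a_def b_def c_def by (auto dest: spec[of _ 0] simp: numeral_2_eq_2)
  have e1: "F x n 0 = real m * a + b" unfolding n a_def b_def by (simp add: F_rec)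
  have e1': "F x n 1 = real m * b + c" unfolding n b_def c_def
    by (simp add: F_rec numeral_2_eq_2)
  have e2: "F x (n+1) 0 = real n * (real m * a + b) + (real m * b + c)"
    using F_rec[of x n 0] e1 e1' by simp
  have "F x (n - 1) 0 * F x (n + 1) 0 - (F x n 0)\<^sup>2 = real m * a\<^sup>2 + a * b + (a * c - b\<^sup>2)"
    unfolding e1 e2 using n a_def by (simp add: power2_eq_square algebra_simps)
  moreover have "real m * a\<^sup>2 + a * b + (a * c - b\<^sup>2) \<ge> 0"
    using a0 b0 ac by (simp add: add_nonneg_nonneg)
  ultimately show ?thesis by linarith
qed

theorem mainTheorem3:
  fixes x :: "nat \<Rightarrow> real"
  assumes "log_convex x"
  shows "log_convex (\<lambda>n. \<Sum>k=0..n. real (stirling n k) * x k)"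
proof -
  have lx: "lc x" unfolding lc_def
  proof (intro conjI allI)
    fix j
    show "0 \<le> x j" using assms unfolding log_convex_def by auto
    have "x (j + 1 - 1) * x (j + 1 + 1) \<ge> (x (j+1))\<^sup>2"
      using assms unfolding log_convex_def by (meson le_add2)
    then show "(x (j + 1))\<^sup>2 \<le> x j * x (j + 2)" by (simp add: add.assoc)
  qed
  have eq: "(\<lambda>n. \<Sum>k=0..n. real (stirling n k) * x k) = (\<lambda>n. F x n 0)"
    unfolding F_def by (simp add: atLeast0AtMost)
  show ?thesis unfolding eq log_convex_def
  proof (intro conjI allI impI)
    fix k show "0 \<le> F x k 0" using F_lc[OF lx] unfolding lc_def by auto
  next
    fix k :: nat assume "k \<ge> 1" then show "(F x k 0)\<^sup>2 \<le> F x (k - 1) 0 * F x (k + 1) 0"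
      using F_step[OF lx] by simp
  qed
qed

end
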